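(* Let $G^c$ be a vertex-coloured graph with $n$ vertices, $m$ edges and $c$ colours, and let $k>0$ be an integer. If $m\ge \binom{n-k+c-1}{2}+n-k$ and $n>k+c-2$, then $\gamma^t(G^c)\le k$. Furthermore (for $k\ge c$), there exist vertex-coloured graphs with $n$ vertices, $c$ colours, exactly $\binom{n-k+c-1}{2}+n-k$ edges and $\gamma^t=k$.
   Context: A vertex-coloured graph $G^c$ with colour set $\{1,\dots,c\}$ is a finite simple graph in which every vertex receives exactly one colour and every colour appears on at least one vertex. A dominating set is tropical if every colour appears on at least one of its vertices; $\gamma^t(G^c)$ is the minimum size of a tropical dominating set. *)

theory Defs
  imports Main
begin

definition simple_graph :: "'a set \<Rightarrow> ('a \<Rightarrow> 'a \<Rightarrow> bool) \<Rightarrow> bool" where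
  "simple_graph V E \<longleftrightarrow> finite V \<and> (\<forall>u v. E u v \<longrightarrow> u \<in> V \<and> v \<in> V)
     \<and> (\<forall>u v. E u v \<longrightarrow> E v u) \<and> (\<forall>v. \<not> E v v)"

definition edges :: "'a set \<Rightarrow> ('a \<Rightarrow> 'a \<Rightarrow> bool) \<Rightarrow> 'a set set" where
  "edges V E = {{u, v} | u v. u \<in> V \<and> v \<in> V \<and> E u v}"

definition num_edges :: "'a set \<Rightarrow> ('a \<Rightarrow> 'a \<Rightarrow> bool) \<Rightarrow> nat" where
  "num_edges V E = card (edges V E)"

definition vertex_coloured :: "'a set \<Rightarrow> ('a \<Rightarrow> nat) \<Rightarrow> nat \<Rightarrow> bool" where
  "vertex_coloured V col c \<longleftrightarrow> col ` V = {1..c}"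

definition dominating :: "'a set \<Rightarrow> ('a \<Rightarrow> 'a \<Rightarrow> bool) \<Rightarrow> 'a set \<Rightarrow> bool" where
  "dominating V E D \<longleftrightarrow> D \<subseteq> V \<and> (\<forall>v\<in>V. v \<in> D \<or> (\<exists>u\<in>D. E u v))"

definition tropical :: "('a \<Rightarrow> nat) \<Rightarrow> nat \<Rightarrow> 'a set \<Rightarrow> bool" where
  "tropical col c D \<longleftrightarrow> {1..c} \<subseteq> col ` D"

definition trop_dom_number :: "'a set \<Rightarrow> ('a \<Rightarrow> 'a \<Rightarrow> bool) \<Rightarrow> ('a \<Rightarrow> nat) \<Rightarrow> nat \<Rightarrow> nat" where
  "trop_dom_number V E col c = Min {card D | D. dominating V E D \<and> tropical col c D}"

end

theory Submission
  imports Defs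
begin


lemma card_ins_le: "card (insert x A) \<le> Suc (card A)"
  by (cases "finite A") (auto simp: card_insert_if)

lemma double_count:
  assumes sym: "\<forall>u v. E u v \<longrightarrow> E v u" and fin: "finite U" "finite A"
  shows "(\<Sum>w\<in>U. card {u\<in>A. E w u}) = (\<Sum>u\<in>A. card {w\<in>U. E u w})"
proof -
  have "(\<Sum>w\<in>U. card {u\<in>A. E w u}) = (\<Sum>w\<in>U. \<Sum>u\<in>A. if E w u then 1 else 0)"
    using fin by (simp add: sum.If_cases Int_def)
  also have "\<dots> = (\<Sum>u\<in>A. \<Sum>w\<in>U. if E w u then 1 else 0)" by (rule sum.swap)
  also have "\<dots> = (\<Sum>u\<in>A. \<Sum>w\<in>U. if E u w then 1 else 0)"
  proof -
    have "\<And>a b. E a b = E b a" using sym by blast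
    then show ?thesis by simp
  qed
  also have "\<dots> = (\<Sum>u\<in>A. card {w\<in>U. E u w})"
    using fin by (simp add: sum.If_cases Int_def)
  finally show ?thesis .
qed

lemma vizing:
  assumes "2 \<le> g"
  shows "finite W \<Longrightarrow> \<forall>u v. E u v \<longrightarrow> E v u \<Longrightarrow> \<forall>v. \<not> E v v \<Longrightarrow>
    \<forall>D. dominating W E D \<longrightarrow> g \<le> card D \<Longrightarrow>
    (\<Sum>w\<in>W. card {u\<in>W. E w u}) \<le> (card W - g) * (card W - g + 2)"
  using assms
proof (induction g arbitrary: W rule: nat_induct_at_least)
  case base
  have deg: "card {u\<in>W. E w u} \<le> card W - 2" if wW: "w \<in> W" for w
  proof -
    have "\<not> dominating W E {w}" using base.prems(4) by force
    then obtain x where x: "x \<in> W" "x \<noteq> w" "\<not> E w x"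
      using wW unfolding dominating_def by auto
    have "{u\<in>W. E w u} \<subseteq> W - {w, x}" using x base.prems(3) by auto
    then have "card {u\<in>W. E w u} \<le> card (W - {w,x})"
      by (simp add: base.prems(1) card_mono)
    also have "\<dots> = card W - 2" using x wW base.prems(1) by (simp add: card_Diff_subset)
    finally show ?thesis .
  qed
  have "(\<Sum>w\<in>W. card {u\<in>W. E w u}) \<le> card W * (card W - 2)"
    using sum_bounded_above[of W "\<lambda>w. card {u\<in>W. E w u}" "card W - 2"] deg by auto
  also have "\<dots> \<le> (card W - 2) * (card W - 2 + 2)"
  proof (cases "card W \<ge> 2")
    case True
    then obtain q where "card W = q + 2" by (metis le_add_diff_inverse2)
    then show ?thesis by simp
  qed simp
  finally show ?case .
next
  case (Suc g)
  note fin = Suc.prems(1) and sym = Suc.prems(2) and irr = Suc.prems(3) and dom = Suc.prems(4)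
  define deg where "deg w = card {u\<in>W. E w u}" for w
  have "W \<noteq> {}"
  proof
    assume "W = {}"
    then have "dominating W E {}" by (simp add: dominating_def)
    with dom show False by force
  qed
  define \<Delta> where "\<Delta> = Max (deg ` W)"
  have "\<Delta> \<in> deg ` W" unfolding \<Delta>_def using fin \<open>W \<noteq> {}\<close> by (intro Max_in) auto
  then obtain v where v: "v \<in> W" "deg v = \<Delta>" by auto
  have maxd: "deg w \<le> \<Delta>" if "w \<in> W" for w using fin that unfolding \<Delta>_def by auto
  define Nv where "Nv = {u\<in>W. E v u}"
  define U where "U = W - insert v Nv"
  have cNv: "card Nv = \<Delta>" using v unfolding Nv_def deg_def by simp
  have vNv: "v \<notin> Nv" using irr unfolding Nv_def by auto
  have finN: "finite Nv" "finite U" using fin unfolding Nv_def U_def by auto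
  have NvW: "insert v Nv \<subseteq> W" using v unfolding Nv_def by auto
  have cU: "card U = card W - Suc \<Delta>"
    unfolding U_def using NvW fin finN vNv cNv by (simp add: card_Diff_subset)
  have domU: "\<forall>D. dominating U E D \<longrightarrow> g \<le> card D"
  proof (intro allI impI)
    fix D assume dD: "dominating U E D"
    have "dominating W E (insert v D)"
      using dD v unfolding dominating_def U_def Nv_def by auto
    then have "Suc g \<le> card (insert v D)" using dom by blast
    also have "\<dots> \<le> Suc (card D)" by (rule card_ins_le)
    finally show "g \<le> card D" by simp
  qed
  have IH: "(\<Sum>w\<in>U. card {u\<in>U. E w u}) \<le> (card U - g) * (card U - g + 2)"
    using Suc.IH[OF finN(2) sym irr domU] Suc.hyps by simp
  have "dominating W E (insert v U)" using v unfolding dominating_def U_def Nv_def by auto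
  then have "Suc g \<le> card (insert v U)" using dom by blast
  also have "\<dots> \<le> Suc (card U)" by (rule card_ins_le)
  finally have gU: "g \<le> card U" by simp
  have eu: "card {w\<in>U. E u w} \<le> card U + 1 - g" if "u \<in> Nv" for u
  proof -
    have "dominating W E ({v, u} \<union> (U - {w\<in>U. E u w}))"
      using v that unfolding dominating_def U_def Nv_def by auto
    then have "Suc g \<le> card ({v, u} \<union> (U - {w\<in>U. E u w}))" using dom by blast
    also have "\<dots> \<le> card {v,u} + card (U - {w\<in>U. E u w})" by (rule card_Un_le)
    also have "\<dots> \<le> 2 + (card U - card {w\<in>U. E u w})"
      using finN card_ins_le[of v "{u}"] by (simp add: card_Diff_subset)
    moreover have "card {w\<in>U. E u w} \<le> card U" using finN by (intro card_mono) auto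
    ultimately show ?thesis by linarith
  qed
  have split: "(\<Sum>w\<in>W. deg w) = (\<Sum>w\<in>insert v Nv. deg w) + (\<Sum>w\<in>U. deg w)"
    unfolding U_def using fin NvW by (metis sum.subset_diff add.commute)
  have s1: "(\<Sum>w\<in>insert v Nv. deg w) \<le> Suc \<Delta> * \<Delta>"
  proof -
    have "(\<Sum>w\<in>insert v Nv. deg w) \<le> card (insert v Nv) * \<Delta>"
      using sum_bounded_above[of "insert v Nv" deg \<Delta>] maxd NvW by auto
    then show ?thesis using finN vNv cNv by simp
  qed
  have degU: "deg w = card {u\<in>U. E w u} + card {u\<in>Nv. E w u}" if "w \<in> U" for w
  proof -
    have "{u\<in>W. E w u} = {u\<in>U. E w u} \<union> {u\<in>Nv. E w u}"
      using that sym unfolding U_def Nv_def by auto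
    moreover have "{u\<in>U. E w u} \<inter> {u\<in>Nv. E w u} = {}" unfolding U_def by auto
    ultimately show ?thesis unfolding deg_def using finN by (simp add: card_Un_disjoint)
  qed
  have "(\<Sum>w\<in>U. deg w) = (\<Sum>w\<in>U. card {u\<in>U. E w u}) + (\<Sum>w\<in>U. card {u\<in>Nv. E w u})"
    using degU by (simp add: sum.distrib)
  also have "(\<Sum>w\<in>U. card {u\<in>Nv. E w u}) = (\<Sum>u\<in>Nv. card {w\<in>U. E u w})"
    using double_count[OF sym finN(2) finN(1)] .
  also have "(\<Sum>u\<in>Nv. card {w\<in>U. E u w}) \<le> \<Delta> * (card U + 1 - g)"
    using sum_bounded_above[of Nv "\<lambda>u. card {w\<in>U. E u w}" "card U + 1 - g"] eu cNv by auto
  finally have s2: "(\<Sum>w\<in>U. deg w) \<le> (card U - g) * (card U - g + 2) + \<Delta> * (card U + 1 - g)"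
    using IH by linarith
  obtain p where p: "card U = g + p" using gU le_Suc_ex by blast
  have "Suc \<Delta> \<le> card W" using card_mono[OF fin NvW] finN vNv cNv by simp
  then have cW: "card W - Suc g = p + \<Delta>" using cU p by simp
  have "(\<Sum>w\<in>W. deg w) \<le> Suc \<Delta> * \<Delta> + (p * (p + 2) + \<Delta> * (p + 1))"
    using split s1 s2 p by simp
  also have "\<dots> \<le> (p + \<Delta>) * (p + \<Delta> + 2)" by (simp add: algebra_simps)
  finally show ?case unfolding deg_def cW .
qed



lemma two_choose2: "2 * (x choose 2) = x * (x - 1)"
proof -
  have "even (x * (x - 1))" by (cases "even x") auto
  then show ?thesis by (simp add: choose_two)
qed

lemma handshake:
  assumes sg: "simple_graph V E"
  shows "2 * num_edges V E = (\<Sum>v\<in>V. card {u\<in>V. E v u})"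
proof -
  have fin: "finite V" and sym: "\<And>u v. E u v \<Longrightarrow> E v u" and irr: "\<And>v. \<not> E v v"
    using sg unfolding simple_graph_def by auto
  define A where "A = (SIGMA v:V. {u\<in>V. E v u})"
  have cA: "card A = (\<Sum>v\<in>V. card {u\<in>V. E v u})" unfolding A_def using fin by simp
  define F where "F e = {p\<in>A. {fst p, snd p} = e}" for e
  have finE: "finite (edges V E)"
  proof -
    have "edges V E \<subseteq> Pow V" unfolding edges_def by auto
    then show ?thesis using fin by (meson finite_Pow_iff rev_finite_subset)
  qed
  have AU: "A = (\<Union>e\<in>edges V E. F e)"
    unfolding A_def F_def edges_def by (auto; blast)
  have cF: "card (F e) = 2" if eE: "e \<in> edges V E" for e
  proof -
    obtain u v where e: "e = {u,v}" "u \<in> V" "v \<in> V" "E u v" using eE unfolding edges_def by auto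
    have "u \<noteq> v" using e irr by auto
    have "F e = {(u,v),(v,u)}"
      unfolding F_def A_def using e sym by (auto simp: doubleton_eq_iff)
    then show ?thesis using \<open>u \<noteq> v\<close> by simp
  qed
  have "card A = (\<Sum>e\<in>edges V E. card (F e))"
    unfolding AU
  proof (rule card_UN_disjoint[OF finE])
    show "\<forall>i\<in>edges V E. finite (F i)" using cF by (metis card.infinite zero_neq_numeral)
    show "\<forall>i\<in>edges V E. \<forall>j\<in>edges V E. i \<noteq> j \<longrightarrow> F i \<inter> F j = {}"
      unfolding F_def by auto
  qed
  also have "\<dots> = 2 * card (edges V E)" using cF by simp
  finally show ?thesis using cA unfolding num_edges_def by simp
qed

lemma edges_le_choose:
  assumes "simple_graph V E"
  shows "num_edges V E \<le> card V choose 2"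
proof -
  have fin: "finite V" using assms unfolding simple_graph_def by auto
  have "edges V E \<subseteq> {B. B \<subseteq> V \<and> card B = 2}"
    using assms unfolding edges_def simple_graph_def by auto (metis card_2_iff)
  then have "card (edges V E) \<le> card {B. B \<subseteq> V \<and> card B = 2}"
    using fin by (intro card_mono) auto
  then show ?thesis using n_subsets[OF fin] unfolding num_edges_def by simp
qed

lemma dominating_mono:
  "dominating V E D \<Longrightarrow> D \<subseteq> D' \<Longrightarrow> D' \<subseteq> V \<Longrightarrow> dominating V E D'"
  unfolding dominating_def by blast

lemma dom_card_lower:
  assumes sg: "simple_graph V E" and vc: "vertex_coloured V col c"
    and H: "\<forall>D. dominating V E D \<and> tropical col c D \<longrightarrow> k < card D"
    and dD: "dominating V E D" and "V \<noteq> {}"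
  shows "k + 2 \<le> card D + c"
proof -
  have fin: "finite V" using sg unfolding simple_graph_def by auto
  have DV: "D \<subseteq> V" using dD unfolding dominating_def by auto
  obtain v where "v \<in> V" using \<open>V \<noteq> {}\<close> by auto
  then obtain d where d: "d \<in> D" using dD unfolding dominating_def by auto
  have "col d \<in> col ` V" using d DV by auto
  then have cd: "col d \<in> {1..c}" using vc unfolding vertex_coloured_def by simp
  define f where "f j = (SOME x. x \<in> V \<and> col x = j)" for j
  have f: "f j \<in> V \<and> col (f j) = j" if "j \<in> {1..c}" for j
  proof -
    have "\<exists>x. x \<in> V \<and> col x = j" using that vc unfolding vertex_coloured_def by (metis imageE)
    then show ?thesis unfolding f_def by (rule someI_ex)
  qed
  define R where "R = f ` ({1..c} - col ` D)"
  have RV: "R \<subseteq> V" unfolding R_def using f by auto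
  have "dominating V E (D \<union> R)" using dominating_mono[OF dD, of "D \<union> R"] DV RV by auto
  moreover have "tropical col c (D \<union> R)"
    unfolding tropical_def
  proof
    fix j assume j: "j \<in> {1..c}"
    show "j \<in> col ` (D \<union> R)"
    proof (cases "j \<in> col ` D")
      case False
      then have "f j \<in> R" unfolding R_def using j by auto
      then show ?thesis using f[OF j] by (metis UnI2 image_eqI)
    qed auto
  qed
  ultimately have "k < card (D \<union> R)" using H by blast
  also have "\<dots> \<le> card D + card R" by (rule card_Un_le)
  also have "card R \<le> card ({1..c} - col ` D)" unfolding R_def by (rule card_image_le) simp
  also have "\<dots> \<le> card ({1..c} - {col d})" using d by (intro card_mono) auto
  also have "\<dots> = c - 1" using cd by simp
  finally show ?thesis using cd by auto
qed

lemma part1: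
  fixes n c k :: nat
  assumes k0: "k > 0" and c1: "c \<ge> 1"
    and sg: "simple_graph V E" and vc: "vertex_coloured V col c" and cV: "card V = n"
    and me: "num_edges V E \<ge> ((n - k + c - 1) choose 2) + (n - k)"
    and nk: "int n > int k + int c - 2"
  shows "trop_dom_number V E col c \<le> k"
proof -
  have fin: "finite V" and sym: "\<forall>u v. E u v \<longrightarrow> E v u" and irr: "\<forall>v. \<not> E v v"
    using sg unfolding simple_graph_def by auto
  define S where "S = {card D | D. dominating V E D \<and> tropical col c D}"
  have finS: "finite S"
  proof -
    have "S \<subseteq> card ` Pow V" unfolding S_def dominating_def by auto
    then show ?thesis using fin by (meson finite_Pow_iff finite_imageI rev_finite_subset)
  qed
  have Vne: "V \<noteq> {}" using vc c1 unfolding vertex_coloured_def by auto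
  have "\<exists>D. dominating V E D \<and> tropical col c D \<and> card D \<le> k"
  proof (rule ccontr)
    assume "\<not> ?thesis"
    then have H: "\<forall>D. dominating V E D \<and> tropical col c D \<longrightarrow> k < card D" by auto
    have "dominating V E V" unfolding dominating_def by auto
    moreover have "tropical col c V" using vc unfolding tropical_def vertex_coloured_def by auto
    ultimately have "k < n" using H cV by auto
    have nk2: "k + c \<le> n + 1" using nk by linarith
    show False
    proof (cases "k < c")
      case True
      have "n \<le> n - k + c - 1" using True by linarith
      then have "n choose 2 \<le> (n - k + c - 1) choose 2" by (rule binomial_right_mono)
      then have "n choose 2 < num_edges V E" using me \<open>k < n\<close> by linarith
      moreover have "num_edges V E \<le> n choose 2" using edges_le_choose[OF sg] cV by simp
      ultimately show False by linarith
    next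
      case False
      define g where "g = k + 2 - c"
      have g2: "2 \<le> g" using False unfolding g_def by linarith
      have domg: "\<forall>D. dominating V E D \<longrightarrow> g \<le> card D"
        using dom_card_lower[OF sg vc H _ Vne] unfolding g_def by force
      have viz: "(\<Sum>w\<in>V. card {u\<in>V. E w u}) \<le> (card V - g) * (card V - g + 2)"
        by (rule vizing[OF g2 fin sym irr domg])
      define x where "x = n - k + c - 2"
      have ng: "card V - g = x" unfolding x_def g_def cV using False \<open>k < n\<close> by linarith
      have x1: "n - k + c - 1 = x + 1" unfolding x_def using \<open>k < n\<close> c1 by linarith
      have ax: "2 * (n - k) \<ge> x + 1" unfolding x_def using nk2 False \<open>k < n\<close> by linarith
      have "2 * num_edges V E \<le> x * (x + 2)" using handshake[OF sg] viz ng by simp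
      moreover have "2 * num_edges V E \<ge> (x + 1) * x + 2 * (n - k)"
        using me two_choose2[of "x + 1"] x1 by simp
      ultimately have "(x + 1) * x + 2 * (n - k) \<le> x * (x + 2)" by linarith
      then have "2 * (n - k) \<le> x" by (simp add: algebra_simps)
      then show False using ax by linarith
    qed
  qed
  then obtain D where D: "dominating V E D" "tropical col c D" "card D \<le> k" by blast
  then have "card D \<in> S" unfolding S_def by blast
  then have "Min S \<le> card D" using finS by (rule Min_le[rotated])
  then show ?thesis using D unfolding trop_dom_number_def S_def by simp
qed



lemma part2:
  fixes n c k :: nat
  assumes c1: "c \<ge> 1" and kc: "k \<ge> c" and nk: "int n > int k + int c - 2"
  shows "\<exists>(V :: nat set) E col.
               simple_graph V E \<and> vertex_coloured V col c \<and> card V = n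
               \<and> num_edges V E = ((n - k + c - 1) choose 2) + (n - k)
               \<and> trop_dom_number V E col c = k"
proof -
  define s where "s = n - k + c - 1"
  have nk2: "k + c \<le> n + 1" using nk by linarith
  have sn: "s < n" unfolding s_def using nk2 kc c1 by linarith
  have cs: "c - 1 \<le> s" unfolding s_def using nk2 kc c1 by linarith
  define V :: "nat set" where "V = {0..<n}"
  define E :: "nat \<Rightarrow> nat \<Rightarrow> bool" where
    "E u v \<longleftrightarrow> (u < s \<and> v < s \<and> u \<noteq> v) \<or> (u = s \<and> c - 1 \<le> v \<and> v < s) \<or> (v = s \<and> c - 1 \<le> u \<and> u < s)"
    for u v
  define col :: "nat \<Rightarrow> nat" where "col i = (if i < c - 1 then i + 2 else 1)" for i
  have sg: "simple_graph V E"
    unfolding simple_graph_def V_def E_def using sn by auto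
  have vc: "vertex_coloured V col c"
    unfolding vertex_coloured_def
  proof
    show "col ` V \<subseteq> {1..c}" unfolding V_def col_def using c1 by auto
    show "{1..c} \<subseteq> col ` V"
    proof
      fix j assume j: "j \<in> {1..c}"
      show "j \<in> col ` V"
      proof (cases "j = 1")
        case True
        have "col s = 1" unfolding col_def using cs by auto
        then show ?thesis using True sn unfolding V_def by (metis atLeastLessThan_iff image_eqI zero_le)
      next
        case False
        then have "col (j - 2) = j" "j - 2 \<in> V" unfolding col_def V_def using j sn cs by auto
        then show ?thesis by (metis image_eqI)
      qed
    qed
  qed
  have cV: "card V = n" unfolding V_def by simp
  have edges_eq: "edges V E = {B. B \<subseteq> {0..<s} \<and> card B = 2} \<union> (\<lambda>q. {s,q}) ` {c-1..<s}"
  proof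
    show "edges V E \<subseteq> {B. B \<subseteq> {0..<s} \<and> card B = 2} \<union> (\<lambda>q. {s,q}) ` {c-1..<s}"
    proof
      fix B assume "B \<in> edges V E"
      then obtain u v where B: "B = {u,v}" "E u v" unfolding edges_def by auto
      show "B \<in> {B. B \<subseteq> {0..<s} \<and> card B = 2} \<union> (\<lambda>q. {s,q}) ` {c-1..<s}"
        using B(2) unfolding E_def
      proof (elim disjE conjE)
        assume "u < s" "v < s" "u \<noteq> v" then show ?thesis using B by auto
      next
        assume "u = s" "c - 1 \<le> v" "v < s" then show ?thesis using B by auto
      next
        assume "v = s" "c - 1 \<le> u" "u < s" then show ?thesis using B by (auto simp: insert_commute)
      qed
    qed
    show "{B. B \<subseteq> {0..<s} \<and> card B = 2} \<union> (\<lambda>q. {s,q}) ` {c-1..<s} \<subseteq> edges V E"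
    proof
      fix B assume "B \<in> {B. B \<subseteq> {0..<s} \<and> card B = 2} \<union> (\<lambda>q. {s,q}) ` {c-1..<s}"
      then show "B \<in> edges V E"
      proof
        assume "B \<in> {B. B \<subseteq> {0..<s} \<and> card B = 2}"
        then obtain x y where "B = {x,y}" "x \<noteq> y" "x < s" "y < s" by (auto simp: card_2_iff)
        then show ?thesis unfolding edges_def E_def V_def using sn by force
      next
        assume "B \<in> (\<lambda>q. {s,q}) ` {c-1..<s}"
        then obtain q where "B = {s,q}" "c - 1 \<le> q" "q < s" by auto
        then show ?thesis unfolding edges_def E_def V_def using sn by force
      qed
    qed
  qed
  have ne: "num_edges V E = (s choose 2) + (n - k)"
  proof -
    have disj: "{B. B \<subseteq> {0..<s} \<and> card B = 2} \<inter> (\<lambda>q. {s,q}) ` {c-1..<s} = {}" by auto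
    have inj: "inj_on (\<lambda>q. {s,q}) {c-1..<s}"
      by (auto simp: inj_on_def doubleton_eq_iff)
    have "card ((\<lambda>q. {s,q}) ` {c-1..<s}) = s - (c - 1)" using card_image[OF inj] by simp
    moreover have "card {B. B \<subseteq> {0..<s} \<and> card B = 2} = s choose 2"
      using n_subsets[of "{0..<s}" 2] by simp
    moreover have "finite {B. B \<subseteq> {0..<s} \<and> card B = 2}" by simp
    ultimately have "card (edges V E) = (s choose 2) + (s - (c - 1))"
      unfolding edges_eq using disj by (simp add: card_Un_disjoint)
    moreover have "s - (c - 1) = n - k" unfolding s_def using nk2 kc c1 by linarith
    ultimately show ?thesis unfolding num_edges_def by simp
  qed
  define S where "S = {card D | D. dominating V E D \<and> tropical col c D}"
  have finS: "finite S"
  proof -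
    have "S \<subseteq> card ` Pow V" unfolding S_def dominating_def by auto
    then show ?thesis unfolding V_def by (meson finite_Pow_iff finite_imageI rev_finite_subset finite_atLeastLessThan)
  qed
  define D0 where "D0 = {0..<c-1} \<union> {s} \<union> {Suc s..<n}"
  have cD0: "card D0 = k"
  proof -
    have "card D0 = (c - 1) + 1 + (n - Suc s)" unfolding D0_def using cs
      by (subst card_Un_disjoint; auto)+
    then show ?thesis unfolding s_def using nk2 kc c1 by linarith
  qed
  have dD0: "dominating V E D0"
    unfolding dominating_def
  proof (intro conjI ballI)
    show "D0 \<subseteq> V" unfolding D0_def V_def using sn cs by auto
    fix v assume v: "v \<in> V"
    show "v \<in> D0 \<or> (\<exists>u\<in>D0. E u v)"
    proof (cases "v < c - 1 \<or> s \<le> v")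
      case True then show ?thesis using v unfolding D0_def V_def by auto
    next
      case False
      then have "E s v" unfolding E_def by auto
      moreover have "s \<in> D0" unfolding D0_def by auto
      ultimately show ?thesis by blast
    qed
  qed
  have tD0: "tropical col c D0"
    unfolding tropical_def
  proof
    fix j assume j: "j \<in> {1..c}"
    show "j \<in> col ` D0"
    proof (cases "j = 1")
      case True
      have "col s = 1" unfolding col_def using cs by auto
      then show ?thesis using True unfolding D0_def by (metis UnCI image_eqI insertI1)
    next
      case False
      then have "col (j - 2) = j" "j - 2 \<in> D0" unfolding col_def D0_def using j cs by auto
      then show ?thesis by (metis image_eqI)
    qed
  qed
  have kS: "k \<in> S" unfolding S_def using dD0 tD0 cD0 by blast
  have lower: "k \<le> card D" if dD: "dominating V E D" and tD: "tropical col c D" for D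
  proof -
    have DV: "D \<subseteq> V" using dD unfolding dominating_def by auto
    have A1: "{0..<c-1} \<subseteq> D"
    proof
      fix i assume i: "i \<in> {0..<c-1}"
      then have "i + 2 \<in> {1..c}" by auto
      then have "i + 2 \<in> col ` D" using tD unfolding tropical_def by blast
      then obtain d where d: "d \<in> D" "col d = i + 2" by (metis imageE)
      then have "d = i" unfolding col_def by (auto split: if_splits)
      then show "i \<in> D" using d by simp
    qed
    have A2: "{Suc s..<n} \<subseteq> D"
    proof
      fix i assume i: "i \<in> {Suc s..<n}"
      then have "i \<in> V" unfolding V_def by auto
      then have "i \<in> D \<or> (\<exists>u\<in>D. E u i)" using dD unfolding dominating_def by auto
      moreover have "\<not> E u i" for u using i unfolding E_def by auto
      ultimately show "i \<in> D" by auto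
    qed
    have "s \<in> V" using sn unfolding V_def by auto
    then have "s \<in> D \<or> (\<exists>u\<in>D. E u s)" using dD unfolding dominating_def by auto
    then obtain z where z: "z \<in> D" "c - 1 \<le> z" "z \<le> s" unfolding E_def using cs by auto
    have "{0..<c-1} \<union> {z} \<union> {Suc s..<n} \<subseteq> D" using A1 A2 z by auto
    then have "card ({0..<c-1} \<union> {z} \<union> {Suc s..<n}) \<le> card D"
      using DV unfolding V_def by (intro card_mono) (auto intro: finite_subset)
    moreover have "card ({0..<c-1} \<union> {z} \<union> {Suc s..<n}) = (c - 1) + 1 + (n - Suc s)"
      using z by (subst card_Un_disjoint; auto)+
    ultimately show ?thesis unfolding s_def using nk2 kc c1 by linarith
  qed
  have "Min S = k"
    using finS kS lower unfolding S_def by (intro Min_eqI) auto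
  then have "trop_dom_number V E col c = k" unfolding trop_dom_number_def S_def by simp
  then show ?thesis using sg vc cV ne unfolding s_def by blast
qed


theorem mainTheorem3:
  fixes n c k :: nat
  assumes "k > 0" and "c \<ge> 1"
  shows "(\<forall>(V :: 'a set) E col.
            simple_graph V E \<and> vertex_coloured V col c \<and> card V = n
            \<and> num_edges V E \<ge> ((n - k + c - 1) choose 2) + (n - k)
            \<and> int n > int k + int c - 2
            \<longrightarrow> trop_dom_number V E col c \<le> k)
       \<and> (k \<ge> c \<and> int n > int k + int c - 2 \<longrightarrow>
            (\<exists>(V :: nat set) E col.
               simple_graph V E \<and> vertex_coloured V col c \<and> card V = n
               \<and> num_edges V E = ((n - k + c - 1) choose 2) + (n - k)
               \<and> trop_dom_number V E col c = k))"
  using part1[OF assms] part2[OF assms(2)] by blast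

end
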